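(* Let $R=\mathbb{Z}[A^{\pm1}]$. Let $G_0\subseteq G_1\subseteq G_2\subseteq\cdots$ be sets with $G_\infty=\bigcup_{i\ge0}G_i$, and let $\mathcal{G}_n$ and $\mathcal{G}_\infty$ be the free $R$-modules with bases $G_n$ and $G_\infty$ (so $\mathcal{G}_n\subseteq\mathcal{G}_\infty$). Let $J_0\subseteq J_1\subseteq\cdots$ be subsets of $\mathcal{G}_\infty$ with $J_\infty=\bigcup_{i\ge0}J_i$, and let $\mathcal{J}_n,\mathcal{J}_\infty$ be the submodules of $\mathcal{G}_\infty$ generated by $J_n,J_\infty$. Suppose: (1) $\mathcal{J}_0\subseteq\mathcal{G}_0$; (2) there is a map $\eta:J_\infty\to G_\infty$ restricting to bijections $J_n\setminus J_{n-1}\to G_n\setminus G_{n-1}$ for all $n\ge1$; (3) for every $n\ge1$ and $r\in J_n\setminus J_{n-1}$ there exist a sign $\epsilon\in\{\pm1\}$, an integer $k$ and $g\in\mathcal{G}_{n-1}$ with $r=\epsilon A^k\eta(r)+g$. Then $\mathcal{G}_\infty/\mathcal{J}_\infty=\mathcal{G}_0/\mathcal{J}_0$, i.e. the natural map $\mathcal{G}_0/\mathcal{J}_0\to\mathcal{G}_\infty/\mathcal{J}_\infty$ is an isomorphism. *)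

theory Defs
  imports Complex_Main "HOL-Library.Poly_Mapping"
begin

text \<open>The ring R = Z[A, A^-1] of integer Laurent polynomials, realised as the
  group ring of (int,+) over int: a finitely supported map k \<mapsto> coefficient of A^k.\<close>
type_synonym laurent = "int \<Rightarrow>\<^sub>0 int"

definition Apow :: "int \<Rightarrow> laurent" where
  "Apow k = Poly_Mapping.single k 1"

definition lscale :: "laurent \<Rightarrow> ('g \<Rightarrow>\<^sub>0 laurent) \<Rightarrow> ('g \<Rightarrow>\<^sub>0 laurent)" where
  "lscale r f = Poly_Mapping.map (\<lambda>c. r * c) f"

definition basisv :: "'g \<Rightarrow> ('g \<Rightarrow>\<^sub>0 laurent)" where
  "basisv g = Poly_Mapping.single g 1"

definition freemod :: "'g set \<Rightarrow> ('g \<Rightarrow>\<^sub>0 laurent) set" where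
  "freemod S = {f. Poly_Mapping.keys f \<subseteq> S}"

definition rspan :: "('g \<Rightarrow>\<^sub>0 laurent) set \<Rightarrow> ('g \<Rightarrow>\<^sub>0 laurent) set" where
  "rspan J = module.span lscale J"

end

theory Submission
  imports Defs
begin

lemma lookup_lscale [simp]: "Poly_Mapping.lookup (lscale r f) x = r * Poly_Mapping.lookup f x"
  unfolding lscale_def by transfer (simp add: when_def)

lemma module_lscale: "module (lscale :: laurent \<Rightarrow> ('g \<Rightarrow>\<^sub>0 laurent) \<Rightarrow> _)"
  by unfold_locales (auto intro!: poly_mapping_eqI simp: lookup_add algebra_simps)

interpretation lm: module "lscale :: laurent \<Rightarrow> ('g \<Rightarrow>\<^sub>0 laurent) \<Rightarrow> _"
  by (rule module_lscale)

lemma keys_lscale: "Poly_Mapping.keys (lscale r f) \<subseteq> Poly_Mapping.keys f"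
  by (auto simp: in_keys_iff)

lemma subspace_freemod: "lm.subspace (freemod S)"
  unfolding lm.subspace_def freemod_def
  using keys_add keys_lscale by fastforce

lemma freemod_mono: "S \<subseteq> T \<Longrightarrow> freemod S \<subseteq> freemod T"
  unfolding freemod_def by auto

lemma Apow_inv: "Apow k * Apow (-k) = 1"
  unfolding Apow_def by (simp add: mult_single)

lemma sum_singles: "(\<Sum>a\<in>Poly_Mapping.keys y. Poly_Mapping.single a (Poly_Mapping.lookup y a)) = y"
  by (rule poly_mapping_eqI) (auto simp: lookup_sum lookup_single when_def in_keys_iff)

lemma lookup_basisv: "Poly_Mapping.lookup (basisv a) b = (if a = b then 1 else 0)"
  unfolding basisv_def by (simp add: lookup_single when_def)

lemma keys_lscale_basisv: "Poly_Mapping.keys (lscale c (basisv a)) \<subseteq> {a}"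
  using keys_lscale[of c "basisv a"] unfolding basisv_def by auto

theorem lemma4p4:
  fixes G :: "nat \<Rightarrow> 'g set"
    and J :: "nat \<Rightarrow> ('g \<Rightarrow>\<^sub>0 laurent) set"
    and \<eta> :: "('g \<Rightarrow>\<^sub>0 laurent) \<Rightarrow> 'g"
  assumes G_mono: "\<And>n. G n \<subseteq> G (Suc n)"
    and J_mono: "\<And>n. J n \<subseteq> J (Suc n)"
    and J_sub: "\<And>n. J n \<subseteq> freemod (\<Union>i. G i)"
    and h1: "rspan (J 0) \<subseteq> freemod (G 0)"
    and h2_maps: "\<And>r. r \<in> (\<Union>i. J i) \<Longrightarrow> \<eta> r \<in> (\<Union>i. G i)"
    and h2_bij: "\<And>n. n \<ge> 1 \<Longrightarrow> bij_betw \<eta> (J n - J (n - 1)) (G n - G (n - 1))"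
    and h3: "\<And>n r. n \<ge> 1 \<Longrightarrow> r \<in> J n - J (n - 1) \<Longrightarrow>
              \<exists>\<epsilon>::int. \<exists>k::int. \<exists>g. (\<epsilon> = 1 \<or> \<epsilon> = -1) \<and> g \<in> freemod (G (n - 1)) \<and>
                 r = lscale (of_int \<epsilon> * Apow k) (basisv (\<eta> r)) + g"
  shows "(\<forall>x \<in> freemod (G 0). x \<in> rspan (\<Union>i. J i) \<longrightarrow> x \<in> rspan (J 0))
       \<and> (\<forall>y \<in> freemod (\<Union>i. G i). \<exists>x \<in> freemod (G 0). y - x \<in> rspan (\<Union>i. J i))"
proof -
  have Gm: "m \<le> n \<Longrightarrow> G m \<subseteq> G n" for m n using lift_Suc_mono_le[of G, OF G_mono] by blast
  have Jm: "m \<le> n \<Longrightarrow> J m \<subseteq> J n" for m n using lift_Suc_mono_le[of J, OF J_mono] by blast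
  have bij: "bij_betw \<eta> (J (Suc m) - J m) (G (Suc m) - G m)" for m using h2_bij[of "Suc m"] by simp
  have h3': "\<exists>\<epsilon>::int. \<exists>k::int. \<exists>g. (\<epsilon> = 1 \<or> \<epsilon> = -1) \<and> g \<in> freemod (G m) \<and>
                 r = lscale (of_int \<epsilon> * Apow k) (basisv (\<eta> r)) + g"
    if "r \<in> J (Suc m) - J m" for m r using h3[of "Suc m" r] that by simp
  have unit: "(of_int \<epsilon> * Apow k) * (of_int \<epsilon> * Apow (-k)) = (1::laurent)"
    if "\<epsilon> = 1 \<or> \<epsilon> = -1" for \<epsilon> k
  proof -
    have "(of_int \<epsilon> * Apow k) * (of_int \<epsilon> * Apow (-k)) = (of_int (\<epsilon>*\<epsilon>)::laurent) * (Apow k * Apow (-k))"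
      by (simp add: algebra_simps)
    also have "\<dots> = 1" using that by (auto simp: Apow_inv)
    finally show ?thesis .
  qed
  have JG: "J m \<subseteq> freemod (G m)" for m
  proof (induction m)
    case 0 then show ?case using h1 lm.span_superset unfolding rspan_def by blast
  next
    case (Suc m)
    show ?case
    proof
      fix r assume r: "r \<in> J (Suc m)"
      show "r \<in> freemod (G (Suc m))"
      proof (cases "r \<in> J m")
        case True then show ?thesis using Suc freemod_mono[OF G_mono[of m]] by blast
      next
        case False
        then have rr: "r \<in> J (Suc m) - J m" using r by blast
        then have e: "\<eta> r \<in> G (Suc m)" using bij[of m] unfolding bij_betw_def by blast
        obtain \<epsilon> k g where g: "g \<in> freemod (G m)" and req: "r = lscale (of_int \<epsilon> * Apow k) (basisv (\<eta> r)) + g"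
          using h3'[OF rr] by blast
        have "Poly_Mapping.keys r \<subseteq> G (Suc m)"
          using keys_add[of "lscale (of_int \<epsilon> * Apow k) (basisv (\<eta> r))" g] keys_lscale_basisv[of "of_int \<epsilon> * Apow k" "\<eta> r"]
            g G_mono[of m] e unfolding freemod_def req[symmetric] by blast
        then show ?thesis unfolding freemod_def by blast
      qed
    qed
  qed
  have spanJG: "rspan (J m) \<subseteq> freemod (G m)" for m
    unfolding rspan_def by (rule lm.span_minimal[OF JG subspace_freemod])
  have step: "x \<in> rspan (J m)" if x1: "x \<in> rspan (J (Suc m))" and x2: "x \<in> freemod (G m)" for x m
  proof -
    obtain t c where t: "finite t" "t \<subseteq> J (Suc m)" and xeq: "x = (\<Sum>a\<in>t. lscale (c a) a)"
      using x1 unfolding rspan_def lm.span_explicit by blast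
    define t1 where "t1 = t \<inter> J m"
    define t2 where "t2 = t - J m"
    have tt: "t = t1 \<union> t2" "t1 \<inter> t2 = {}" unfolding t1_def t2_def by auto
    have fin: "finite t1" "finite t2" using t(1) unfolding t1_def t2_def by auto
    have xsplit: "x = (\<Sum>a\<in>t1. lscale (c a) a) + (\<Sum>a\<in>t2. lscale (c a) a)"
      unfolding xeq tt(1) by (rule sum.union_disjoint[OF fin tt(2)])
    have s1: "(\<Sum>a\<in>t1. lscale (c a) a) \<in> rspan (J m)"
      unfolding rspan_def by (rule lm.span_sum, rule lm.span_scale, rule lm.span_base) (auto simp: t1_def)
    define z where "z = (\<Sum>a\<in>t2. lscale (c a) a)"
    have zx: "z = x - (\<Sum>a\<in>t1. lscale (c a) a)" using xsplit unfolding z_def by simp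
    have zG: "z \<in> freemod (G m)"
      unfolding zx by (rule lm.subspace_diff[OF subspace_freemod x2]) (use s1 spanJG in blast)
    have t2J: "t2 \<subseteq> J (Suc m) - J m" using t(2) unfolding t2_def by blast
    have c0: "c r0 = 0" if r0: "r0 \<in> t2" for r0
    proof -
      define b where "b = \<eta> r0"
      have bG: "b \<in> G (Suc m) - G m" using bij[of m] r0 t2J unfolding bij_betw_def b_def by blast
      have injn: "inj_on \<eta> (J (Suc m) - J m)" using bij[of m] unfolding bij_betw_def by blast
      have lk0: "Poly_Mapping.lookup z b = 0" using zG bG unfolding freemod_def by (auto simp: in_keys_iff)
      have lr: "Poly_Mapping.lookup r b = 0" if "r \<in> t2" "r \<noteq> r0" for r
      proof -
        have rr: "r \<in> J (Suc m) - J m" using that t2J by blast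
        obtain \<epsilon> k g where g: "g \<in> freemod (G m)" and req: "r = lscale (of_int \<epsilon> * Apow k) (basisv (\<eta> r)) + g"
          using h3'[OF rr] by blast
        have "\<eta> r \<noteq> b" using injn rr r0 t2J that(2) unfolding b_def inj_on_def by blast
        moreover have "Poly_Mapping.lookup g b = 0" using g bG unfolding freemod_def by (auto simp: in_keys_iff)
        ultimately show ?thesis by (subst req) (simp add: lookup_add lookup_basisv)
      qed
      obtain \<epsilon> k g where e: "\<epsilon> = 1 \<or> \<epsilon> = -1" and g: "g \<in> freemod (G m)"
        and req: "r0 = lscale (of_int \<epsilon> * Apow k) (basisv (\<eta> r0)) + g"
        using h3'[of r0 m] r0 t2J by blast
      have "Poly_Mapping.lookup g b = 0" using g bG unfolding freemod_def by (auto simp: in_keys_iff)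
      then have lr0: "Poly_Mapping.lookup r0 b = of_int \<epsilon> * Apow k"
        by (subst req) (simp add: lookup_add lookup_basisv b_def)
      have "Poly_Mapping.lookup z b = (\<Sum>a\<in>t2. c a * Poly_Mapping.lookup a b)"
        unfolding z_def by (simp add: lookup_sum)
      also have "\<dots> = c r0 * Poly_Mapping.lookup r0 b"
        by (rule sum.remove[OF fin(2) r0, THEN trans]) (simp add: lr sum.neutral)
      finally have "c r0 * (of_int \<epsilon> * Apow k) = 0" using lk0 lr0 by simp
      then have h0: "c r0 * (of_int \<epsilon> * Apow k) * (of_int \<epsilon> * Apow (-k)) = 0" by (simp only: mult_zero_left)
      have "c r0 = c r0 * ((of_int \<epsilon> * Apow k) * (of_int \<epsilon> * Apow (-k)))" using unit[OF e, of k] by simp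
      also have "\<dots> = 0" using h0 by (simp only: mult.assoc)
      finally show ?thesis .
    qed
    have "z = 0" unfolding z_def by (rule sum.neutral) (simp add: c0)
    then have "x = (\<Sum>a\<in>t1. lscale (c a) a)" using zx by simp
    then show ?thesis using s1 by simp
  qed
  have inN: "\<exists>N. x \<in> rspan (J N)" if "x \<in> rspan (\<Union>i. J i)" for x
    using that unfolding rspan_def
  proof (induction rule: lm.span_induct_alt)
    case base then show ?case using lm.span_zero by blast
  next
    case (step c x y)
    then obtain i N where i: "x \<in> J i" and N: "y \<in> lm.span (J N)" by blast
    have "x \<in> lm.span (J (max i N))" using Jm[of i "max i N"] i lm.span_base by auto
    moreover have "y \<in> lm.span (J (max i N))" using lm.span_mono[OF Jm[of N "max i N"]] N by auto
    ultimately show ?case using lm.span_add lm.span_scale by blast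
  qed
  have down: "x \<in> rspan (J N) \<longrightarrow> x \<in> rspan (J 0)" if "x \<in> freemod (G 0)" for x N
  proof (induction N)
    case 0 then show ?case by simp
  next
    case (Suc N)
    have "x \<in> freemod (G N)" using that freemod_mono[OF Gm[of 0 N]] by auto
    then show ?case using step Suc by blast
  qed
  have part1: "\<forall>x \<in> freemod (G 0). x \<in> rspan (\<Union>i. J i) \<longrightarrow> x \<in> rspan (J 0)"
    using inN down by blast
  define P where "P y \<longleftrightarrow> (\<exists>x \<in> freemod (G 0). y - x \<in> rspan (\<Union>i. J i))" for y
  have P_add: "P (a + b)" if pab: "P a" "P b" for a b
  proof -
    obtain x1 x2 where x: "x1 \<in> freemod (G 0)" "a - x1 \<in> rspan (\<Union>i. J i)" "x2 \<in> freemod (G 0)" "b - x2 \<in> rspan (\<Union>i. J i)"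
      using pab unfolding P_def by blast
    have "(a - x1) + (b - x2) \<in> rspan (\<Union>i. J i)" using x(2,4) unfolding rspan_def by (rule lm.span_add)
    moreover have "(a - x1) + (b - x2) = (a + b) - (x1 + x2)" by (simp add: algebra_simps)
    moreover have "x1 + x2 \<in> freemod (G 0)" using x(1,3) by (rule lm.subspace_add[OF subspace_freemod])
    ultimately show ?thesis unfolding P_def by metis
  qed
  have P_scale: "P (lscale c a)" if pa: "P a" for a c
  proof -
    obtain x1 where x: "x1 \<in> freemod (G 0)" "a - x1 \<in> rspan (\<Union>i. J i)"
      using pa unfolding P_def by blast
    have "lscale c (a - x1) \<in> rspan (\<Union>i. J i)" using x(2) unfolding rspan_def by (rule lm.span_scale)
    moreover have "lscale c (a - x1) = lscale c a - lscale c x1" by (rule lm.scale_right_diff_distrib)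
    moreover have "lscale c x1 \<in> freemod (G 0)" using x(1) by (rule lm.subspace_scale[OF subspace_freemod])
    ultimately show ?thesis unfolding P_def by metis
  qed
  have P_refl: "P y" if "y \<in> freemod (G 0)" for y
  proof -
    have "y - y \<in> rspan (\<Union>i. J i)" unfolding rspan_def using lm.span_zero by simp
    then show ?thesis unfolding P_def using that by blast
  qed
  have P_0: "P 0" by (rule P_refl, rule lm.subspace_0[OF subspace_freemod])
  have P_sum: "P (sum f A)" if "\<And>a. a \<in> A \<Longrightarrow> P (f a)" for f and A :: "'x set"
    using that by (induction A rule: infinite_finite_induct) (auto simp: P_0 P_add)
  have Q: "\<forall>y \<in> freemod (G n). P y" for n
  proof (induction n)
    case 0 then show ?case using P_refl by blast
  next
    case (Suc n)
    have single: "P (Poly_Mapping.single a v)" if a: "a \<in> G (Suc n)" for a v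
    proof (cases "a \<in> G n")
      case True
      have "Poly_Mapping.keys (Poly_Mapping.single a v) \<subseteq> G n" using True by simp
      then show ?thesis using Suc unfolding freemod_def by blast
    next
      case False
      then have aa: "a \<in> G (Suc n) - G n" using a by blast
      obtain r where r: "r \<in> J (Suc n) - J n" and ra: "\<eta> r = a"
      proof -
        have "a \<in> \<eta> ` (J (Suc n) - J n)" using bij[of n] aa unfolding bij_betw_def by simp
        then show ?thesis using that by blast
      qed
      obtain \<epsilon> k g where e: "\<epsilon> = 1 \<or> \<epsilon> = -1" and g: "g \<in> freemod (G n)"
        and req0: "r = lscale (of_int \<epsilon> * Apow k) (basisv (\<eta> r)) + g"
        using h3'[OF r] by blast
      have req: "r = lscale (of_int \<epsilon> * Apow k) (basisv a) + g" using req0 unfolding ra .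
      define u where "u = v * (of_int \<epsilon> * Apow (-k))"
      have "lscale u (r - g) = lscale u (lscale (of_int \<epsilon> * Apow k) (basisv a))" by (subst req) simp
      also have "\<dots> = Poly_Mapping.single a v"
      proof (rule poly_mapping_eqI)
        fix b
        have uu: "u * (of_int \<epsilon> * Apow k) = v"
          proof -
          have "u * (of_int \<epsilon> * Apow k) = v * ((of_int \<epsilon> * Apow k) * (of_int \<epsilon> * Apow (-k)))"
            unfolding u_def by (simp add: mult_ac)
          then show ?thesis using unit[OF e, of k] by simp
        qed
        show "Poly_Mapping.lookup (lscale u (lscale (of_int \<epsilon> * Apow k) (basisv a))) b = Poly_Mapping.lookup (Poly_Mapping.single a v) b"
          by (simp only: lookup_lscale lookup_basisv lookup_single) (simp add: when_def uu)
      qed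
      finally have sv: "Poly_Mapping.single a v = lscale u r - lscale u g"
        by (simp only: lm.scale_right_diff_distrib)
      have "lscale u g \<in> freemod (G n)" by (rule lm.subspace_scale[OF subspace_freemod g])
      then have "P (lscale u g)" using Suc by blast
      then obtain x where x: "x \<in> freemod (G 0)" "lscale u g - x \<in> rspan (\<Union>i. J i)" unfolding P_def by blast
      have rJ: "lscale u r \<in> rspan (\<Union>i. J i)" unfolding rspan_def
        using r by (intro lm.span_scale lm.span_base) blast
      have "Poly_Mapping.single a v - (- x) = lscale u r - (lscale u g - x)" unfolding sv by (simp add: algebra_simps)
      also have "\<dots> \<in> rspan (\<Union>i. J i)" using rJ x(2) unfolding rspan_def by (rule lm.span_diff)
      finally have inS: "Poly_Mapping.single a v - (- x) \<in> rspan (\<Union>i. J i)" .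
      have "- x \<in> freemod (G 0)" by (rule lm.subspace_neg[OF subspace_freemod x(1)])
      then show ?thesis unfolding P_def using inS by (rule bexI[rotated])
    qed
    show ?case
    proof
      fix y assume y: "y \<in> freemod (G (Suc n))"
      have "P (\<Sum>a\<in>Poly_Mapping.keys y. Poly_Mapping.single a (Poly_Mapping.lookup y a))"
      proof (rule P_sum)
        fix a assume "a \<in> Poly_Mapping.keys y"
        then have "a \<in> G (Suc n)" using y unfolding freemod_def by blast
        then show "P (Poly_Mapping.single a (Poly_Mapping.lookup y a))" by (rule single)
      qed
      then show "P y" by (simp add: sum_singles)
    qed
  qed
  have part2: "\<forall>y \<in> freemod (\<Union>i. G i). P y"
  proof
    fix y assume y: "y \<in> freemod (\<Union>i. G i)"
    have "P (Poly_Mapping.single a (Poly_Mapping.lookup y a))" if ak: "a \<in> Poly_Mapping.keys y" for a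
    proof -
      obtain i where "a \<in> G i" using ak y unfolding freemod_def by blast
      then have "Poly_Mapping.single a (Poly_Mapping.lookup y a) \<in> freemod (G i)" unfolding freemod_def by simp
      then show ?thesis using Q[of i] by blast
    qed
    then have "P (\<Sum>a\<in>Poly_Mapping.keys y. Poly_Mapping.single a (Poly_Mapping.lookup y a))"
      by (rule P_sum)
    then show "P y" by (simp add: sum_singles)
  qed
  show ?thesis using part1 part2 unfolding P_def by blast
qed

end
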